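(* For every oriented path $P$, $\mathrm{mad}_{\delta^+}(P)=|V(P)|-1$.
   Context: An oriented path is an orientation of an undirected path. A subdivision of a digraph $F$ is a digraph obtained from $F$ by replacing each arc $(x,y)$ by a directed path from $x$ to $y$ (internally disjoint, new internal vertices). For a digraph $F$, $\mathrm{mad}_{\delta^+}(F)$ is the least integer $c$ such that every digraph $D$ with minimum out-degree $\delta^+(D)\ge c$ contains a subdivision of $F$ as a subdigraph. *)

theory Defs
  imports Main
begin

definition digraph :: "'a set \<Rightarrow> ('a \<times> 'a) set \<Rightarrow> bool" where
  "digraph V A \<longleftrightarrow> finite V \<and> A \<subseteq> V \<times> V \<and> (\<forall>v. (v, v) \<notin> A)"

definition outdeg :: "('a \<times> 'a) set \<Rightarrow> 'a \<Rightarrow> nat" where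
  "outdeg A v = card {w. (v, w) \<in> A}"

definition oriented_path :: "'a set \<Rightarrow> ('a \<times> 'a) set \<Rightarrow> bool" where
  "oriented_path V A \<longleftrightarrow> digraph V A \<and>
     (\<exists>vs. vs \<noteq> [] \<and> distinct vs \<and> set vs = V \<and>
        A \<subseteq> {(vs ! i, vs ! Suc i) | i. Suc i < length vs} \<union> {(vs ! Suc i, vs ! i) | i. Suc i < length vs} \<and>
        (\<forall>i. Suc i < length vs \<longrightarrow> ((vs ! i, vs ! Suc i) \<in> A \<longleftrightarrow> (vs ! Suc i, vs ! i) \<notin> A)))"

definition dipath :: "('a \<times> 'a) set \<Rightarrow> 'a list \<Rightarrow> bool" where
  "dipath A ps \<longleftrightarrow> 2 \<le> length ps \<and> distinct ps \<and>
     (\<forall>i. Suc i < length ps \<longrightarrow> (ps ! i, ps ! Suc i) \<in> A)"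

definition inner :: "'a list \<Rightarrow> 'a list" where
  "inner ps = butlast (tl ps)"

definition contains_subdivision ::
  "'a set \<Rightarrow> ('a \<times> 'a) set \<Rightarrow> 'b set \<Rightarrow> ('b \<times> 'b) set \<Rightarrow> bool" where
  "contains_subdivision VF AF VD AD \<longleftrightarrow>
     (\<exists>(f :: 'a \<Rightarrow> 'b) (P :: 'a \<times> 'a \<Rightarrow> 'b list).
        inj_on f VF \<and> f ` VF \<subseteq> VD \<and>
        (\<forall>(x, y) \<in> AF. dipath AD (P (x, y)) \<and> hd (P (x, y)) = f x \<and> last (P (x, y)) = f y) \<and>
        (\<forall>e \<in> AF. set (inner (P e)) \<inter> f ` VF = {}) \<and>
        (\<forall>e \<in> AF. \<forall>e' \<in> AF. e \<noteq> e' \<longrightarrow> set (inner (P e)) \<inter> set (inner (P e')) = {}))"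

text \<open>Host digraphs are taken on
  vertex type nat (every finite digraph is isomorphic to one on nat).\<close>
definition mad_outdeg :: "'a set \<Rightarrow> ('a \<times> 'a) set \<Rightarrow> nat" where
  "mad_outdeg VF AF = (LEAST c :: nat. \<forall>(VD :: nat set) AD.
       digraph VD AD \<and> VD \<noteq> {} \<and> (\<forall>v \<in> VD. c \<le> outdeg AD v) \<longrightarrow>
       contains_subdivision VF AF VD AD)"

end

theory Submission imports Defs begin

definition closedin :: "('b\<times>'b) set \<Rightarrow> 'b set \<Rightarrow> 'b set \<Rightarrow> bool" where
  "closedin E U T \<longleftrightarrow> T \<subseteq> U \<and> (\<forall>a\<in>T. \<forall>b\<in>U. (a,b) \<in> E \<longrightarrow> b \<in> T)"

definition strong :: "('b\<times>'b) set \<Rightarrow> 'b set \<Rightarrow> bool" where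
  "strong E T \<longleftrightarrow> (\<forall>a\<in>T. \<forall>b\<in>T. (a,b) \<in> (E \<inter> T\<times>T)\<^sup>*)"

lemma rtrancl_sub: "(a,c) \<in> (E \<inter> T\<times>T)\<^sup>* \<Longrightarrow> a \<in> T \<Longrightarrow> c \<in> T"
  by (induction rule: rtrancl_induct) auto

lemma min_closed:
  assumes "finite U" "closedin E U X" "X \<noteq> {}"
  shows "\<exists>T. T \<subseteq> X \<and> T \<noteq> {} \<and> closedin E U T \<and> strong E T"
proof -
  define F where "F = {T. T \<subseteq> X \<and> T \<noteq> {} \<and> closedin E U T}"
  have XU: "X \<subseteq> U" using assms(2) unfolding closedin_def by simp
  have finX: "finite X" using assms(1) XU by (rule finite_subset[rotated])
  have "X \<in> F" using assms unfolding F_def by simp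
  hence ex: "\<exists>c. \<exists>T. T \<in> F \<and> card T = c" by blast
  define m where "m = (LEAST c. \<exists>T. T \<in> F \<and> card T = c)"
  have "\<exists>T. T \<in> F \<and> card T = m" unfolding m_def using ex by (rule LeastI_ex)
  then obtain T where T: "T \<in> F" "card T = m" by blast
  have minT: "card T \<le> card T'" if "T' \<in> F" for T'
  proof -
    have "m \<le> card T'" unfolding m_def using that by (intro Least_le) blast
    thus ?thesis using T(2) by simp
  qed
  have TX: "T \<subseteq> X" using T(1) unfolding F_def by simp
  have Tcl: "closedin E U T" using T(1) unfolding F_def by simp
  have finT: "finite T" using finX TX by (rule finite_subset[rotated])
  have "strong E T" unfolding strong_def
  proof (intro ballI)
    fix a b assume a: "a \<in> T" and b: "b \<in> T"
    define R where "R = {c. (a,c) \<in> (E \<inter> T\<times>T)\<^sup>*}"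
    have RT: "R \<subseteq> T" using a rtrancl_sub unfolding R_def by fast
    have "R \<in> F" unfolding F_def closedin_def
    proof (intro CollectI conjI ballI impI)
      show "R \<subseteq> X" using RT TX by (rule subset_trans)
      show "R \<noteq> {}" unfolding R_def by auto
      show "R \<subseteq> U" using RT TX XU by blast
      fix c d assume c: "c \<in> R" and d: "d \<in> U" and cd: "(c,d) \<in> E"
      have cT: "c \<in> T" using c RT by blast
      have "d \<in> T" using Tcl cT d cd unfolding closedin_def by blast
      hence "(c,d) \<in> E \<inter> T\<times>T" using cT cd by blast
      moreover have "(a,c) \<in> (E \<inter> T\<times>T)\<^sup>*" using c unfolding R_def by simp
      ultimately have "(a,d) \<in> (E \<inter> T\<times>T)\<^sup>*" by (meson rtrancl_into_rtrancl)
      thus "d \<in> R" unfolding R_def by simp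
    qed
    hence "card T \<le> card R" by (rule minT)
    hence "R = T" using RT finT by (simp add: card_seteq)
    thus "(a,b) \<in> (E \<inter> T\<times>T)\<^sup>*" using b unfolding R_def by auto
  qed
  thus ?thesis using T unfolding F_def by auto
qed

lemma exit_arc: "(u,w) \<in> R\<^sup>* \<Longrightarrow> u \<in> T \<Longrightarrow> w \<notin> T \<Longrightarrow> \<exists>a b. (a,b) \<in> R \<and> a \<in> T \<and> b \<notin> T"
  by (induction rule: rtrancl_induct) auto

lemma path_to_set:
  assumes "(a,b) \<in> R\<^sup>*" "b \<in> T"
  shows "\<exists>ps. ps \<noteq> [] \<and> hd ps = a \<and> last ps \<in> T \<and> distinct ps \<and> set (butlast ps) \<inter> T = {}
     \<and> (\<forall>i. Suc i < length ps \<longrightarrow> (ps!i, ps!Suc i) \<in> R)"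
  using assms
proof (induction rule: converse_rtrancl_induct)
  case base
  then show ?case by (intro exI[of _ "[b]"]) auto
next
  case (step a c)
  then obtain ps where ps: "ps \<noteq> []" "hd ps = c" "last ps \<in> T" "distinct ps" "set (butlast ps) \<inter> T = {}"
     "\<forall>i. Suc i < length ps \<longrightarrow> (ps!i, ps!Suc i) \<in> R" by blast
  show ?case
  proof (cases "a \<in> T")
    case True then show ?thesis by (intro exI[of _ "[a]"]) auto
  next
    case aT: False
    show ?thesis
    proof (cases "a \<in> set ps")
      case True
      then obtain j where j: "j < length ps" "ps!j = a" by (meson in_set_conv_nth)
      let ?qs = "drop j ps"
      have "?qs \<noteq> []" using j by simp
      moreover have "hd ?qs = a" using j by (simp add: hd_drop_conv_nth)
      moreover have "last ?qs \<in> T" using j ps by simp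
      moreover have "distinct ?qs" using ps by simp
      moreover have "set (butlast ?qs) \<inter> T = {}" using ps(5)
        by (metis butlast_drop disjoint_iff in_set_dropD)
      moreover have "\<forall>i. Suc i < length ?qs \<longrightarrow> (?qs!i, ?qs!Suc i) \<in> R"
        using ps(6) j by (auto simp: add.commute)
      ultimately show ?thesis by blast
    next
      case False
      let ?qs = "a # ps"
      have "set (butlast ?qs) \<inter> T = {}" using ps aT by auto
      moreover have "\<forall>i. Suc i < length ?qs \<longrightarrow> (?qs!i, ?qs!Suc i) \<in> R"
      proof (intro allI impI)
        fix i assume "Suc i < length ?qs"
        thus "(?qs!i, ?qs!Suc i) \<in> R" using ps step(1)
        proof (cases i)
          case 0
          have "ps ! 0 = c" using ps(1,2) by (simp add: hd_conv_nth)
          thus ?thesis using 0 step(1) by simp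
        next
          case (Suc j)
          thus ?thesis using ps(6) \<open>Suc i < length ?qs\<close> by simp
        qed
      qed
      moreover have "distinct ?qs" using ps False by simp
      moreover have "last ?qs \<in> T" using ps by simp
      ultimately show ?thesis by (intro exI[of _ ?qs]) simp
    qed
  qed
qed


definition emb :: "('b\<times>'b) set \<Rightarrow> bool list \<Rightarrow> 'b list \<Rightarrow> 'b list list \<Rightarrow> bool" where
 "emb E ds ws Qs \<longleftrightarrow> length ws = Suc (length ds) \<and> length Qs = length ds \<and> distinct ws \<and>
   (\<forall>i<length ds. dipath E (Qs!i) \<and>
      (if ds!i then hd (Qs!i) = ws!i \<and> last (Qs!i) = ws!Suc i else hd (Qs!i) = ws!Suc i \<and> last (Qs!i) = ws!i)
      \<and> set (inner (Qs!i)) \<inter> set ws = {}) \<and>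
   (\<forall>i<length ds. \<forall>j<length ds. i \<noteq> j \<longrightarrow> set (inner (Qs!i)) \<inter> set (inner (Qs!j)) = {})"

lemma set_inner: "set (inner xs) \<subseteq> set xs"
  unfolding inner_def by (cases xs) (auto dest: in_set_butlastD)

lemma emb_snoc:
  assumes e: "emb E ds ws Qs" and wsT: "set ws \<subseteq> T" and QT: "\<forall>Q\<in>set Qs. set Q \<subseteq> T"
    and vT: "v \<notin> T" and dp: "dipath E Q"
    and ends: "if d then hd Q = last ws \<and> last Q = v else hd Q = v \<and> last Q = last ws"
    and inn: "set (inner Q) \<inter> insert v T = {}"
  shows "emb E (ds@[d]) (ws@[v]) (Qs@[Q])"
proof -
  let ?n = "length ds"
  have lw: "length ws = Suc ?n" and lQ: "length Qs = ?n" and dw: "distinct ws" using e unfolding emb_def by auto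
  have old: "\<And>i. i < ?n \<Longrightarrow> dipath E (Qs!i) \<and>
      (if ds!i then hd (Qs!i) = ws!i \<and> last (Qs!i) = ws!Suc i else hd (Qs!i) = ws!Suc i \<and> last (Qs!i) = ws!i)
      \<and> set (inner (Qs!i)) \<inter> set ws = {}" using e unfolding emb_def by blast
  have olddisj: "\<And>i j. i < ?n \<Longrightarrow> j < ?n \<Longrightarrow> i \<noteq> j \<Longrightarrow> set (inner (Qs!i)) \<inter> set (inner (Qs!j)) = {}"
    using e unfolding emb_def by blast
  have innT: "\<And>i. i < ?n \<Longrightarrow> set (inner (Qs!i)) \<subseteq> T"
    using QT lQ set_inner by (metis nth_mem subset_trans)
  have lastws: "last ws = ws ! ?n" using lw by (metis diff_Suc_1 last_conv_nth list.size(3) nat.distinct(1))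
  have dist: "distinct (ws@[v])" using dw vT wsT by auto
  have part1: "\<forall>i<length (ds@[d]). dipath E ((Qs@[Q])!i) \<and>
      (if (ds@[d])!i then hd ((Qs@[Q])!i) = (ws@[v])!i \<and> last ((Qs@[Q])!i) = (ws@[v])!Suc i
       else hd ((Qs@[Q])!i) = (ws@[v])!Suc i \<and> last ((Qs@[Q])!i) = (ws@[v])!i)
      \<and> set (inner ((Qs@[Q])!i)) \<inter> set (ws@[v]) = {}"
  proof (intro allI impI)
    fix i assume "i < length (ds@[d])"
    hence "i < ?n \<or> i = ?n" by auto
    thus "dipath E ((Qs@[Q])!i) \<and>
      (if (ds@[d])!i then hd ((Qs@[Q])!i) = (ws@[v])!i \<and> last ((Qs@[Q])!i) = (ws@[v])!Suc i
       else hd ((Qs@[Q])!i) = (ws@[v])!Suc i \<and> last ((Qs@[Q])!i) = (ws@[v])!i)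
      \<and> set (inner ((Qs@[Q])!i)) \<inter> set (ws@[v]) = {}"
    proof
      assume i: "i < ?n"
      have "Suc i < length ws" using i lw by simp
      moreover have "set (inner (Qs!i)) \<inter> {v} = {}" using innT[OF i] vT by blast
      ultimately show ?thesis using old[OF i] i lQ lw by (simp add: nth_append)
    next
      assume i: "i = ?n"
      have "set (inner Q) \<inter> set ws = {}" using inn wsT by blast
      moreover have "v \<notin> set (inner Q)" using inn by blast
      ultimately show ?thesis using i lQ lw dp ends lastws by (simp add: nth_append)
    qed
  qed
  have part2: "\<forall>i<length (ds@[d]). \<forall>j<length (ds@[d]). i \<noteq> j \<longrightarrow>
     set (inner ((Qs@[Q])!i)) \<inter> set (inner ((Qs@[Q])!j)) = {}"
  proof (intro allI impI)
    fix i j assume i: "i < length (ds@[d])" and j: "j < length (ds@[d])" and ij: "i \<noteq> j"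
    have iQ: "i < ?n \<Longrightarrow> set (inner Q) \<inter> set (inner (Qs!i)) = {}" for i
      using innT inn by blast
    show "set (inner ((Qs@[Q])!i)) \<inter> set (inner ((Qs@[Q])!j)) = {}"
    proof (cases "i < ?n")
      case True
      show ?thesis
      proof (cases "j < ?n")
        case True
        thus ?thesis using \<open>i < ?n\<close> olddisj ij lQ by (simp add: nth_append)
      next
        case False
        hence "j = ?n" using j by simp
        thus ?thesis using \<open>i < ?n\<close> iQ lQ by (auto simp add: nth_append)
      qed
    next
      case False
      hence "i = ?n" using i by simp
      hence "j < ?n" using j ij by simp
      thus ?thesis using \<open>i = ?n\<close> iQ lQ by (auto simp add: nth_append)
    qed
  qed
  show ?thesis unfolding emb_def using part1 part2 dist lw lQ by simp
qed


lemma deg_closed: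
  assumes "finite S" "v \<in> S" "closedin E (S - {v}) T" "u \<in> T" "Suc k \<le> card {w\<in>S. (u,w)\<in>E}"
  shows "k \<le> card {w\<in>T. (u,w)\<in>E}"
proof -
  have "{w\<in>S. (u,w)\<in>E} - {v} \<subseteq> {w\<in>T. (u,w)\<in>E}" using assms(3,4) unfolding closedin_def by blast
  moreover have "finite {w\<in>T. (u,w)\<in>E}" using assms(1,3) unfolding closedin_def
    by (metis (no_types, lifting) finite_Diff finite_subset mem_Collect_eq subsetI)
  ultimately have "card ({w\<in>S. (u,w)\<in>E} - {v}) \<le> card {w\<in>T. (u,w)\<in>E}" by (rule card_mono[rotated])
  moreover have "card {w\<in>S. (u,w)\<in>E} \<le> card ({w\<in>S. (u,w)\<in>E} - {v}) + 1"
  proof -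
    have "finite {w\<in>S. (u,w)\<in>E}" using assms(1) by simp
    thus ?thesis by (simp add: card_Diff_singleton_if) linarith
  qed
  ultimately show ?thesis using assms(5) by linarith
qed


lemma core:
  assumes "finite S" "strong E S" "\<forall>x. (x,x) \<notin> E" "\<forall>u\<in>S. length ds \<le> card {w\<in>S. (u,w)\<in>E}" "v \<in> S"
  shows "\<exists>ws Qs. emb E ds ws Qs \<and> last ws = v \<and> set ws \<subseteq> S \<and> (\<forall>Q\<in>set Qs. set Q \<subseteq> S)"
  using assms
proof (induction ds arbitrary: S v rule: rev_induct)
  case Nil
  show ?case by (intro exI[of _ "[v]"] exI[of _ "[]"]) (simp add: emb_def Nil.prems)
next
  case (snoc d ds)
  note fin = snoc.prems(1) and str = snoc.prems(2) and noloop = snoc.prems(3) and vS = snoc.prems(5)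
  have deg: "\<And>u. u \<in> S \<Longrightarrow> Suc (length ds) \<le> card {w\<in>S. (u,w)\<in>E}" using snoc.prems(4) by simp
  have "card {w\<in>S. (v,w)\<in>E} > 0" using deg[OF vS] by simp
  then obtain y where yS: "y \<in> S" and vy: "(v,y) \<in> E" by (metis (no_types, lifting) card_gt_0_iff ex_in_conv mem_Collect_eq)
  have yv: "y \<noteq> v" using vy noloop by blast
  define U where "U = S - {v}"
  have finU: "finite U" using fin unfolding U_def by simp
  have IHapp: "\<exists>ws Qs. emb E ds ws Qs \<and> last ws = a \<and> set ws \<subseteq> T \<and> (\<forall>Q\<in>set Qs. set Q \<subseteq> T)"
    if T: "T \<noteq> {}" "closedin E U T" "strong E T" and aT: "a \<in> T" for T a
  proof -
    have finT: "finite T" using T(2) finU unfolding closedin_def by (metis finite_subset)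
    have "\<forall>u\<in>T. length ds \<le> card {w\<in>T. (u,w)\<in>E}"
    proof
      fix u assume "u \<in> T"
      hence "u \<in> S" using T(2) unfolding closedin_def U_def by blast
      show "length ds \<le> card {w\<in>T. (u,w)\<in>E}"
        by (rule deg_closed[OF fin vS T(2)[unfolded U_def] \<open>u \<in> T\<close> deg[OF \<open>u \<in> S\<close>]])
    qed
    thus ?thesis using snoc.IH[OF finT T(3) noloop _ aT] by blast
  qed
  show ?case
  proof (cases d)
    case True
    have "closedin E U U" unfolding closedin_def by simp
    moreover have "U \<noteq> {}" using yS yv unfolding U_def by blast
    ultimately obtain T where T: "T \<subseteq> U" "T \<noteq> {}" "closedin E U T" "strong E T"
      using min_closed[OF finU] by blast
    obtain u where uT: "u \<in> T" using T(2) by blast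
    have uS: "u \<in> S" using uT T(1) unfolding U_def by blast
    have "(u,v) \<in> (E \<inter> S\<times>S)\<^sup>*" using str uS vS unfolding strong_def by blast
    moreover have "v \<notin> T" using T(1) unfolding U_def by blast
    ultimately obtain a b where ab: "(a,b) \<in> E \<inter> S\<times>S" "a \<in> T" "b \<notin> T"
      using exit_arc[OF _ uT] by blast
    have bv: "b = v" using ab T(3) unfolding closedin_def U_def by blast
    obtain ws Qs where W: "emb E ds ws Qs" "last ws = a" "set ws \<subseteq> T" "\<forall>Q\<in>set Qs. set Q \<subseteq> T"
      using IHapp[OF T(2,3,4) ab(2)] by blast
    have av: "a \<noteq> v" using ab bv by blast
    have dp: "dipath E [a,v]" unfolding dipath_def using ab bv av by (auto simp: less_Suc_eq)
    have inn: "inner [a,v] = []" unfolding inner_def by simp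
    have e: "emb E (ds@[d]) (ws@[v]) (Qs@[[a,v]])"
      by (rule emb_snoc[OF W(1,3,4) \<open>v \<notin> T\<close> dp]) (simp_all add: True W(2) inn)
    have "set (ws@[v]) \<subseteq> S" using W(3) T(1) vS unfolding U_def by auto
    moreover have "\<forall>Q\<in>set (Qs@[[a,v]]). set Q \<subseteq> S" using W(4) T(1) vS ab unfolding U_def by auto
    ultimately show ?thesis using e by (intro exI[of _ "ws@[v]"] exI[of _ "Qs@[[a,v]]"]) simp
  next
    case False
    define X where "X = {b\<in>U. (y,b) \<in> (E \<inter> U\<times>U)\<^sup>*}"
    have yU: "y \<in> U" using yS yv unfolding U_def by blast
    have "closedin E U X" unfolding closedin_def
    proof (intro conjI ballI impI)
      show "X \<subseteq> U" unfolding X_def by blast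
      fix b c assume b: "b \<in> X" and c: "c \<in> U" and bc: "(b,c) \<in> E"
      have "(b,c) \<in> E \<inter> U\<times>U" using b c bc unfolding X_def by blast
      moreover have "(y,b) \<in> (E \<inter> U\<times>U)\<^sup>*" using b unfolding X_def by blast
      ultimately have "(y,c) \<in> (E \<inter> U\<times>U)\<^sup>*" by (meson rtrancl_into_rtrancl)
      thus "c \<in> X" using c unfolding X_def by blast
    qed
    moreover have "X \<noteq> {}" using yU unfolding X_def by blast
    ultimately obtain T where T: "T \<subseteq> X" "T \<noteq> {}" "closedin E U T" "strong E T"
      using min_closed[OF finU] by blast
    obtain t where tT: "t \<in> T" using T(2) by blast
    have "(y,t) \<in> (E \<inter> U\<times>U)\<^sup>*" using tT T(1) unfolding X_def by blast
    then obtain ps where ps: "ps \<noteq> []" "hd ps = y" "last ps \<in> T" "distinct ps" "set (butlast ps) \<inter> T = {}"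
      "\<forall>i. Suc i < length ps \<longrightarrow> (ps!i, ps!Suc i) \<in> E \<inter> U\<times>U"
      using path_to_set[OF _ tT] by blast
    have psU: "set ps \<subseteq> U"
    proof
      fix x assume "x \<in> set ps"
      then obtain i where i: "i < length ps" "ps!i = x" by (meson in_set_conv_nth)
      show "x \<in> U"
      proof (cases i)
        case 0 thus ?thesis using i ps(1,2) yU by (simp add: hd_conv_nth)
      next
        case (Suc j) thus ?thesis using i ps(6)[rule_format, of j] by auto
      qed
    qed
    have vU: "v \<notin> U" unfolding U_def by blast
    have TU: "T \<subseteq> U" using T(3) unfolding closedin_def by blast
    have vT: "v \<notin> T" using TU vU by blast
    obtain ws Qs where W: "emb E ds ws Qs" "last ws = last ps" "set ws \<subseteq> T" "\<forall>Q\<in>set Qs. set Q \<subseteq> T"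
      using IHapp[OF T(2,3,4) ps(3)] by blast
    let ?Q = "v # ps"
    have dp: "dipath E ?Q" unfolding dipath_def
    proof (intro conjI allI impI)
      show "2 \<le> length ?Q" using ps(1) by (cases ps) auto
      show "distinct ?Q" using ps(4) psU vU by auto
      fix i assume i: "Suc i < length ?Q"
      show "(?Q!i, ?Q!Suc i) \<in> E"
      proof (cases i)
        case 0
        have "ps ! 0 = y" using ps(1,2) by (simp add: hd_conv_nth)
        thus ?thesis using 0 vy by simp
      next
        case (Suc j) thus ?thesis using i ps(6)[rule_format, of j] by auto
      qed
    qed
    have inn: "inner ?Q = butlast ps" unfolding inner_def by simp
    have innd: "set (inner ?Q) \<inter> insert v T = {}" unfolding inn using ps(5) psU vU
      by (auto dest: in_set_butlastD)
    have e: "emb E (ds@[d]) (ws@[v]) (Qs@[?Q])"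
      by (rule emb_snoc[OF W(1,3,4) vT dp _ innd]) (simp add: False W(2) ps(1))
    have "set (ws@[v]) \<subseteq> S" using W(3) TU vS unfolding U_def by auto
    moreover have "\<forall>Q\<in>set (Qs@[?Q]). set Q \<subseteq> S" using W(4) TU vS psU unfolding U_def by auto
    ultimately show ?thesis using e by (intro exI[of _ "ws@[v]"] exI[of _ "Qs@[?Q]"]) simp
  qed
qed


lemma emb_to_sub:
  assumes dv: "distinct vs" and sv: "set vs = V" and ne: "vs \<noteq> []"
    and Asub: "A \<subseteq> {(vs ! i, vs ! Suc i) | i. Suc i < length vs} \<union> {(vs ! Suc i, vs ! i) | i. Suc i < length vs}"
    and xor: "\<forall>i. Suc i < length vs \<longrightarrow> ((vs!i, vs!Suc i) \<in> A \<longleftrightarrow> (vs!Suc i, vs!i) \<notin> A)"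
    and e: "emb E (map (\<lambda>i. (vs!i, vs!Suc i) \<in> A) [0..<length vs - 1]) ws Qs" and wsD: "set ws \<subseteq> VD"
  shows "contains_subdivision V A VD E"
proof -
  let ?n = "length vs"
  define ds where "ds = map (\<lambda>i. (vs!i, vs!Suc i) \<in> A) [0..<length vs - 1]"
  have lds: "length ds = ?n - 1" unfolding ds_def by simp
  have dsi: "\<And>i. Suc i < ?n \<Longrightarrow> ds!i = ((vs!i, vs!Suc i) \<in> A)" unfolding ds_def by (subst nth_map) (auto simp: nth_upt)
  have e': "emb E ds ws Qs" using e unfolding ds_def .
  have lw0: "length ws = Suc (length ds)" and lQ: "length Qs = length ds" and dw: "distinct ws"
    and E1all: "\<forall>i<length ds. dipath E (Qs!i) \<and>
      (if ds!i then hd (Qs!i) = ws!i \<and> last (Qs!i) = ws!Suc i else hd (Qs!i) = ws!Suc i \<and> last (Qs!i) = ws!i)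
      \<and> set (inner (Qs!i)) \<inter> set ws = {}"
    and E2all: "\<forall>i<length ds. \<forall>j<length ds. i \<noteq> j \<longrightarrow> set (inner (Qs!i)) \<inter> set (inner (Qs!j)) = {}"
    using e' unfolding emb_def by blast+
  have lw: "length ws = ?n" using lw0 lds ne by (cases vs) auto
  have E1: "dipath E (Qs!i) \<and>
      (if ds!i then hd (Qs!i) = ws!i \<and> last (Qs!i) = ws!Suc i else hd (Qs!i) = ws!Suc i \<and> last (Qs!i) = ws!i)
      \<and> set (inner (Qs!i)) \<inter> set ws = {}" if "Suc i < ?n" for i
    by (rule E1all[rule_format]) (use lds that in linarith)
  have E2: "set (inner (Qs!i)) \<inter> set (inner (Qs!j)) = {}" if "Suc i < ?n" "Suc j < ?n" "i \<noteq> j" for i j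
    by (rule E2all[rule_format]) (use lds that in linarith)+
  define f where "f = (\<lambda>x. the (map_of (zip vs ws) x))"
  have fv: "f (vs!i) = ws!i" if "i < ?n" for i
  proof -
    have "map_of (zip vs ws) (vs!i) = Some (ws!i)" by (rule map_of_zip_nth) (use lw dv that in simp_all)
    thus ?thesis unfolding f_def by simp
  qed
  have fV: "f ` V \<subseteq> set ws"
  proof
    fix z assume "z \<in> f ` V"
    then obtain x where x: "x \<in> set vs" "z = f x" using sv by blast
    from x(1) obtain i where i: "i < ?n" "vs!i = x" unfolding in_set_conv_nth by blast
    have "z = ws!i" using x(2) fv[OF i(1)] i(2) by simp
    thus "z \<in> set ws" using i lw by simp
  qed
  define idx where "idx = (\<lambda>e. THE i. Suc i < ?n \<and> (e = (vs!i, vs!Suc i) \<or> e = (vs!Suc i, vs!i)))"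
  have uniq: "i = j" if "Suc i < ?n" "Suc j < ?n" "ee = (vs!i, vs!Suc i) \<or> ee = (vs!Suc i, vs!i)"
     "ee = (vs!j, vs!Suc j) \<or> ee = (vs!Suc j, vs!j)" for i j ee
  proof -
    have inj: "\<And>a b. a < ?n \<Longrightarrow> b < ?n \<Longrightarrow> vs!a = vs!b \<Longrightarrow> a = b"
      using dv by (simp add: nth_eq_iff_index_eq)
    have b: "i < ?n" "j < ?n" "Suc i < ?n" "Suc j < ?n" using that(1,2) by simp_all
    from that(3,4) show ?thesis
    proof (elim disjE)
      assume "ee = (vs!i, vs!Suc i)" "ee = (vs!j, vs!Suc j)"
      thus ?thesis using inj b by simp
    next
      assume "ee = (vs!i, vs!Suc i)" "ee = (vs!Suc j, vs!j)"
      hence "i = Suc j" "Suc i = j" using inj b by simp_all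
      thus ?thesis by simp
    next
      assume "ee = (vs!Suc i, vs!i)" "ee = (vs!j, vs!Suc j)"
      hence "Suc i = j" "i = Suc j" using inj b by simp_all
      thus ?thesis by simp
    next
      assume "ee = (vs!Suc i, vs!i)" "ee = (vs!Suc j, vs!j)"
      thus ?thesis using inj b by simp
    qed
  qed
  have idx_eq: "idx ee = i" if "Suc i < ?n" "ee = (vs!i, vs!Suc i) \<or> ee = (vs!Suc i, vs!i)" for i ee
    unfolding idx_def by (rule the_equality) (use that uniq in blast)+
  have arc: "\<exists>i. Suc i < ?n \<and> (ee = (vs!i, vs!Suc i) \<or> ee = (vs!Suc i, vs!i))" if "ee \<in> A" for ee
  proof -
    have "ee \<in> {(vs ! i, vs ! Suc i) | i. Suc i < length vs} \<union> {(vs ! Suc i, vs ! i) | i. Suc i < length vs}"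
      using that Asub by (rule subsetD[rotated])
    thus ?thesis by blast
  qed
  define P where "P = (\<lambda>ee. Qs ! idx ee)"
  show ?thesis unfolding contains_subdivision_def
  proof (intro exI[of _ f] exI[of _ P] conjI)
    show "inj_on f V"
    proof (rule inj_onI)
      fix x y assume "x \<in> V" "y \<in> V" "f x = f y"
      have "x \<in> set vs" "y \<in> set vs" using \<open>x \<in> V\<close> \<open>y \<in> V\<close> sv by simp_all
      then obtain i j where i: "i < ?n" "vs!i = x" and j: "j < ?n" "vs!j = y" unfolding in_set_conv_nth by blast
      have "ws!i = ws!j" using fv[OF i(1)] fv[OF j(1)] i(2) j(2) \<open>f x = f y\<close> by simp
      hence "i = j" using dw lw i(1) j(1) by (simp add: nth_eq_iff_index_eq)
      thus "x = y" using i(2) j(2) by simp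
    qed
    show "f ` V \<subseteq> VD" using fV wsD by blast
    show "\<forall>(x, y)\<in>A. dipath E (P (x, y)) \<and> hd (P (x, y)) = f x \<and> last (P (x, y)) = f y"
    proof (intro ballI, clarify)
      fix x y assume xy: "(x,y) \<in> A"
      then obtain i where i: "Suc i < ?n" "(x,y) = (vs!i, vs!Suc i) \<or> (x,y) = (vs!Suc i, vs!i)" using arc by blast
      have Pi: "P (x,y) = Qs!i" unfolding P_def using idx_eq[OF i] by simp
      from i(2) show "dipath E (P (x, y)) \<and> hd (P (x, y)) = f x \<and> last (P (x, y)) = f y"
      proof
        assume fw: "(x,y) = (vs!i, vs!Suc i)"
        hence "ds!i" using dsi[OF i(1)] xy by simp
        moreover have "f x = ws!i" "f y = ws!Suc i" using fw fv[OF Suc_lessD[OF i(1)]] fv[OF i(1)] by auto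
        ultimately show ?thesis using E1[OF i(1)] Pi by simp
      next
        assume bw: "(x,y) = (vs!Suc i, vs!i)"
        hence "\<not> ds!i" using dsi[OF i(1)] xy xor i(1) by simp
        moreover have "f y = ws!i" "f x = ws!Suc i" using bw fv[OF Suc_lessD[OF i(1)]] fv[OF i(1)] by auto
        ultimately show ?thesis using E1[OF i(1)] Pi by simp
      qed
    qed
    show "\<forall>ee\<in>A. set (inner (P ee)) \<inter> f ` V = {}"
    proof
      fix ee assume "ee \<in> A"
      then obtain i where i: "Suc i < ?n" "ee = (vs!i, vs!Suc i) \<or> ee = (vs!Suc i, vs!i)" using arc by blast
      have "P ee = Qs!i" unfolding P_def using idx_eq[OF i] by simp
      moreover have C: "set (inner (Qs!i)) \<inter> set ws = {}" using E1[OF i(1), THEN conjunct2, THEN conjunct2] .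
      ultimately show "set (inner (P ee)) \<inter> f ` V = {}" using fV by auto
    qed
    show "\<forall>ee\<in>A. \<forall>ee'\<in>A. ee \<noteq> ee' \<longrightarrow> set (inner (P ee)) \<inter> set (inner (P ee')) = {}"
    proof (intro ballI impI)
      fix ee ee' assume a: "ee \<in> A" "ee' \<in> A" "ee \<noteq> ee'"
      obtain i where i: "Suc i < ?n" "ee = (vs!i, vs!Suc i) \<or> ee = (vs!Suc i, vs!i)" using arc a(1) by blast
      obtain j where j: "Suc j < ?n" "ee' = (vs!j, vs!Suc j) \<or> ee' = (vs!Suc j, vs!j)" using arc a(2) by blast
      have "i \<noteq> j"
      proof
        assume "i = j"
        thus False using i j a xor[rule_format, OF i(1)] by auto
      qed
      thus "set (inner (P ee)) \<inter> set (inner (P ee')) = {}"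
        using E2[OF i(1) j(1)] idx_eq[OF i] idx_eq[OF j] unfolding P_def by simp
    qed
  qed
qed


theorem corollary20:
  fixes V :: "'a set" and A :: "('a \<times> 'a) set"
  assumes "oriented_path V A"
  shows "mad_outdeg V A = card V - 1"
proof -
  have ex: "\<exists>vs. vs \<noteq> [] \<and> distinct vs \<and> set vs = V \<and>
        A \<subseteq> {(vs ! i, vs ! Suc i) | i. Suc i < length vs} \<union> {(vs ! Suc i, vs ! i) | i. Suc i < length vs} \<and>
        (\<forall>i. Suc i < length vs \<longrightarrow> ((vs ! i, vs ! Suc i) \<in> A \<longleftrightarrow> (vs ! Suc i, vs ! i) \<notin> A))"
    using assms unfolding oriented_path_def by (rule conjunct2)
  then obtain vs where H: "vs \<noteq> [] \<and> distinct vs \<and> set vs = V \<and>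
        A \<subseteq> {(vs ! i, vs ! Suc i) | i. Suc i < length vs} \<union> {(vs ! Suc i, vs ! i) | i. Suc i < length vs} \<and>
        (\<forall>i. Suc i < length vs \<longrightarrow> ((vs ! i, vs ! Suc i) \<in> A \<longleftrightarrow> (vs ! Suc i, vs ! i) \<notin> A))"
    by (rule exE)
  note ne = H[THEN conjunct1]
  note dv = H[THEN conjunct2, THEN conjunct1]
  note sv = H[THEN conjunct2, THEN conjunct2, THEN conjunct1]
  note Asub = H[THEN conjunct2, THEN conjunct2, THEN conjunct2, THEN conjunct1]
  note xor = H[THEN conjunct2, THEN conjunct2, THEN conjunct2, THEN conjunct2]
  have cV: "card V = length vs" using dv sv distinct_card by blast
  define Pr where "Pr = (\<lambda>c. \<forall>(VD :: nat set) AD.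
       digraph VD AD \<and> VD \<noteq> {} \<and> (\<forall>v \<in> VD. c \<le> outdeg AD v) \<longrightarrow>
       contains_subdivision V A VD AD)"
  have up: "Pr (card V - 1)" unfolding Pr_def
  proof (intro allI impI)
    fix VD :: "nat set" and AD assume h: "digraph VD AD \<and> VD \<noteq> {} \<and> (\<forall>v \<in> VD. card V - 1 \<le> outdeg AD v)"
    have finD: "finite VD" and ADs: "AD \<subseteq> VD \<times> VD" and nl: "\<forall>x. (x,x) \<notin> AD"
      using h unfolding digraph_def by auto
    have cl: "closedin AD VD VD" unfolding closedin_def by simp
    have neD: "VD \<noteq> {}" using h by (elim conjE)
    obtain S where S: "S \<subseteq> VD" "S \<noteq> {}" "closedin AD VD S" "strong AD S"
      using min_closed[OF finD cl neD] by (elim exE conjE)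
    obtain v where vS: "v \<in> S" using S(2) by blast
    define ds where "ds = map (\<lambda>i. (vs!i, vs!Suc i) \<in> A) [0..<length vs - 1]"
    have finS: "finite S" using finD S(1) by (rule finite_subset[rotated])
    have degS: "\<forall>u\<in>S. length ds \<le> card {w\<in>S. (u,w)\<in>AD}"
    proof
      fix u assume uS: "u \<in> S"
      have "{w\<in>S. (u,w)\<in>AD} = {w. (u,w)\<in>AD}"
      proof
        show "{w\<in>S. (u,w)\<in>AD} \<subseteq> {w. (u,w)\<in>AD}" by blast
        show "{w. (u,w)\<in>AD} \<subseteq> {w\<in>S. (u,w)\<in>AD}"
        proof
          fix w assume "w \<in> {w. (u,w)\<in>AD}"
          hence uw: "(u,w) \<in> AD" by simp
          hence "w \<in> VD" using ADs by blast
          hence "w \<in> S" using S(3) uS uw unfolding closedin_def by blast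
          thus "w \<in> {w\<in>S. (u,w)\<in>AD}" using uw by simp
        qed
      qed
      moreover have "card V - 1 \<le> outdeg AD u" using h uS S(1) by blast
      ultimately show "length ds \<le> card {w\<in>S. (u,w)\<in>AD}" unfolding outdeg_def ds_def cV by simp
    qed
    obtain ws Qs where W: "emb AD ds ws Qs" "set ws \<subseteq> S"
      using core[OF finS S(4) nl degS vS] by blast
    show "contains_subdivision V A VD AD"
      by (rule emb_to_sub[OF dv sv ne Asub xor W(1)[unfolded ds_def]]) (use W(2) S(1) in blast)
  qed
  have low: "card V - 1 \<le> m" if "Pr m" for m
  proof (rule ccontr)
    assume "\<not> card V - 1 \<le> m"
    hence mN: "m < card V - 1" by simp
    define N where "N = card V - 1"
    define VD where "VD = {0..<N}"
    define AD where "AD = {(a,b). a < N \<and> b < N \<and> a \<noteq> b}"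
    have dg: "digraph VD AD" unfolding digraph_def VD_def AD_def by auto
    have nD: "VD \<noteq> {}" using mN unfolding VD_def N_def by auto
    have od: "\<forall>v\<in>VD. m \<le> outdeg AD v"
    proof
      fix v assume "v \<in> VD"
      hence vN: "v < N" unfolding VD_def by simp
      have "{w. (v,w) \<in> AD} = {0..<N} - {v}" unfolding AD_def using vN by auto
      hence "outdeg AD v = N - 1" unfolding outdeg_def using vN by simp
      thus "m \<le> outdeg AD v" using mN unfolding N_def by simp
    qed
    have "contains_subdivision V A VD AD" by (rule that[unfolded Pr_def, rule_format]) (intro conjI dg nD od)
    hence "\<exists>f :: 'a \<Rightarrow> nat. inj_on f V \<and> f ` V \<subseteq> VD" unfolding contains_subdivision_def
      by (elim exE conjE) (intro exI conjI)
    then obtain f :: "'a \<Rightarrow> nat" where f: "inj_on f V" "f ` V \<subseteq> VD" by (elim exE conjE)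
    have "card V \<le> card VD" using card_inj_on_le[OF f] unfolding VD_def by simp
    thus False using mN unfolding VD_def N_def by simp
  qed
  have "(LEAST c. Pr c) = card V - 1" by (rule Least_equality[of Pr, OF up low])
  thus ?thesis unfolding mad_outdeg_def Pr_def by simp
qed

end
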